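(* Let $\Gamma,\Delta$ be finitely generated groups with free continuous actions on compact metric spaces $Y$ and $X$ respectively, and let $f:Y\to X$ be a map inducing a coarse embedding of warped cones, i.e. there are an index set $I$, a map $i\mapsto t_i$ from $I$ onto $(0,\infty)$, a map $i\mapsto\tau_i\in(0,\infty)$, and non-decreasing functions $\sigma_\pm:[0,\infty)\to[0,\infty)$ tending to infinity with $\sigma_-(d_\Gamma(y,y'))\le d_\Delta(f(y),f(y'))\le\sigma_+(d_\Gamma(y,y'))$ on $(t_iY,d_\Gamma)\to(\tau_iX,d_\Delta)$ for all $i$. Then there is a cocycle $\delta:\Gamma\times Y\to\Delta$ (i.e. $\delta(\gamma_2,\gamma_1y)\delta(\gamma_1,y)=\delta(\gamma_2\gamma_1,y)$), continuous if $f$ is continuous, and non-decreasing functions $\rho_\pm:[0,\infty)\to[0,\infty)$ tending to infinity such that $\rho_-(|\gamma|)\le|\delta(\gamma,y)|\le\rho_+(|\gamma|)$ for all $\gamma\in\Gamma$, $y\in Y$. In particular, $\Gamma$ embeds coarsely into $\Delta$.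
   Context: $|\cdot|$ is word length with respect to fixed finite symmetric generating sets. For a compact metric space $(Y,d)$ with a $\Gamma$-action and $t>0$, $tY$ is $Y$ with metric $td$ and $d_\Gamma$ is the largest metric on $tY$ with $d_\Gamma\le td$ and $d_\Gamma(y,sy)\le1$ for generators $s$. *)

theory Defs
  imports "HOL-Analysis.Analysis" "HOL-Algebra.Group_Action" "HOL-Algebra.Generated_Groups"
begin

definition fg_group :: "'g monoid \<Rightarrow> 'g set \<Rightarrow> bool" where
  "fg_group G S \<longleftrightarrow> group G \<and> finite S \<and> S \<subseteq> carrier G \<and>
     (\<forall>s\<in>S. inv\<^bsub>G\<^esub> s \<in> S) \<and> generate G S = carrier G"

definition word_length :: "'g monoid \<Rightarrow> 'g set \<Rightarrow> 'g \<Rightarrow> nat" where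
  "word_length G S g = (LEAST n. \<exists>xs. set xs \<subseteq> S \<and> length xs = n \<and>
      foldr (\<lambda>x y. x \<otimes>\<^bsub>G\<^esub> y) xs \<one>\<^bsub>G\<^esub> = g)"

definition free_continuous_action :: "'g monoid \<Rightarrow> ('g \<Rightarrow> 'y::metric_space \<Rightarrow> 'y) \<Rightarrow> bool" where
  "free_continuous_action G act \<longleftrightarrow> group_action G UNIV act \<and>
     (\<forall>g\<in>carrier G. continuous_on UNIV (act g)) \<and>
     (\<forall>g\<in>carrier G. \<forall>y. act g y = y \<longrightarrow> g = \<one>\<^bsub>G\<^esub>)"

definition is_metric :: "('a \<Rightarrow> 'a \<Rightarrow> real) \<Rightarrow> bool" where
  "is_metric m \<longleftrightarrow> (\<forall>x y. m x y = 0 \<longleftrightarrow> x = y) \<and> (\<forall>x y. m x y = m y x) \<and>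
     (\<forall>x y z. m x z \<le> m x y + m y z)"

definition warped_dist :: "'g set \<Rightarrow> ('g \<Rightarrow> 'y::metric_space \<Rightarrow> 'y) \<Rightarrow> real \<Rightarrow> 'y \<Rightarrow> 'y \<Rightarrow> real" where
  "warped_dist S act t y y' = Sup {m y y' | m. is_metric m \<and>
      (\<forall>a b. m a b \<le> t * dist a b) \<and> (\<forall>a. \<forall>s\<in>S. m a (act s a) \<le> 1)}"

definition control_fun :: "(real \<Rightarrow> real) \<Rightarrow> bool" where
  "control_fun \<rho> \<longleftrightarrow> mono_on {0..} \<rho> \<and> (\<forall>x\<ge>0. \<rho> x \<ge> 0) \<and> filterlim \<rho> at_top at_top"

definition cocycle :: "'g monoid \<Rightarrow> 'h monoid \<Rightarrow> ('g \<Rightarrow> 'y \<Rightarrow> 'y) \<Rightarrow> ('g \<Rightarrow> 'y \<Rightarrow> 'h) \<Rightarrow> bool" where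
  "cocycle G H act \<delta> \<longleftrightarrow> (\<forall>g\<in>carrier G. \<forall>y. \<delta> g y \<in> carrier H) \<and>
     (\<forall>g1\<in>carrier G. \<forall>g2\<in>carrier G. \<forall>y.
        \<delta> g2 (act g1 y) \<otimes>\<^bsub>H\<^esub> \<delta> g1 y = \<delta> (g2 \<otimes>\<^bsub>G\<^esub> g1) y)"

definition coarse_embedding :: "'g monoid \<Rightarrow> 'g set \<Rightarrow> 'h monoid \<Rightarrow> 'h set \<Rightarrow> ('g \<Rightarrow> 'h) \<Rightarrow> bool" where
  "coarse_embedding G S H T \<phi> \<longleftrightarrow> \<phi> \<in> carrier G \<rightarrow> carrier H \<and>
     (\<exists>\<rho>m \<rho>p. control_fun \<rho>m \<and> control_fun \<rho>p \<and>
       (\<forall>g\<in>carrier G. \<forall>h\<in>carrier G.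
          \<rho>m (real (word_length G S (inv\<^bsub>G\<^esub> g \<otimes>\<^bsub>G\<^esub> h)))
            \<le> real (word_length H T (inv\<^bsub>H\<^esub> \<phi> g \<otimes>\<^bsub>H\<^esub> \<phi> h)) \<and>
          real (word_length H T (inv\<^bsub>H\<^esub> \<phi> g \<otimes>\<^bsub>H\<^esub> \<phi> h))
            \<le> \<rho>p (real (word_length G S (inv\<^bsub>G\<^esub> g \<otimes>\<^bsub>G\<^esub> h)))))"

end

theory Submission
  imports Defs
begin


inductive chn :: "'g set \<Rightarrow> ('g \<Rightarrow> 'a::metric_space \<Rightarrow> 'a) \<Rightarrow> 'a \<Rightarrow> 'a \<Rightarrow> nat \<Rightarrow> real \<Rightarrow> bool"
  for S act a where
  c0: "chn S act a a 0 0"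
| cm: "chn S act a b n e \<Longrightarrow> chn S act a b' n (e + dist b b')"
| cj: "chn S act a b n e \<Longrightarrow> s \<in> S \<Longrightarrow> chn S act a (act s b) (Suc n) e"

definition DD :: "'g set \<Rightarrow> ('g \<Rightarrow> 'a::metric_space \<Rightarrow> 'a) \<Rightarrow> real \<Rightarrow> 'a \<Rightarrow> 'a \<Rightarrow> real" where
  "DD S act t a b = Inf {real n + t * e | n e. chn S act a b n e}"

lemma chn_nonneg: "chn S act a b n e \<Longrightarrow> e \<ge> 0"
  by (induction rule: chn.induct) auto

lemma chn_trans: "chn S act b c n2 e2 \<Longrightarrow> chn S act a b n1 e1 \<Longrightarrow> chn S act a c (n1+n2) (e1+e2)"
proof (induction rule: chn.induct)
  case c0 then show ?case by simp
next
  case (cm b' n e b'')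
  have "chn S act a b'' (n1 + n) ((e1 + e) + dist b' b'')" using cm by (intro chn.cm) auto
  then show ?case by (simp add: add.assoc)
next
  case (cj b' n e s)
  then show ?case using chn.cj[of S act a b' "n1+n" "e1+e" s] by simp
qed

lemma chn_zero: "chn S act a b n e \<Longrightarrow> n = 0 \<Longrightarrow> dist a b \<le> e"
proof (induction rule: chn.induct)
  case (cm b n e b')
  then show ?case using dist_triangle[of a b' b] by (simp add: dist_commute)
qed auto

lemma chn_suc: "chn S act a b m e \<Longrightarrow> m = Suc n \<Longrightarrow>
   \<exists>c s e1. chn S act a c n e1 \<and> s \<in> S \<and> e1 + dist (act s c) b \<le> e"
proof (induction rule: chn.induct)
  case (cm b m e b')
  then obtain c s e1 where "chn S act a c n e1" "s \<in> S" "e1 + dist (act s c) b \<le> e" by blast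
  moreover have "dist (act s c) b' \<le> dist (act s c) b + dist b b'" by (rule dist_triangle)
  ultimately show ?case by (intro exI[of _ c] exI[of _ s] exI[of _ e1]) auto
next
  case (cj b m e s)
  then show ?case by (intro exI[of _ b] exI[of _ s] exI[of _ e]) auto
qed auto

lemma chn_lower: "chn S act a b n e \<Longrightarrow> t > 0 \<Longrightarrow> min 1 (t * dist a b) \<le> real n + t * e"
proof (induction rule: chn.induct)
  case (cm b n e b')
  have "t * dist a b' \<le> t * dist a b + t * dist b b'"
    using dist_triangle[of a b' b] cm(3) by (simp add: dist_commute distrib_left[symmetric])
  moreover have "t * dist b b' \<ge> 0" using cm(3) by simp
  moreover have "t * e \<ge> 0" using cm(3) chn_nonneg[OF cm(1)] by simp
  ultimately have "min 1 (t * dist a b') \<le> min 1 (t * dist a b) + t * dist b b'"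
    by (simp add: min_def)
  then show ?case using cm by (simp add: distrib_left)
next
  case (cj b n e s)
  have "t * e \<ge> 0" using cj(4) chn_nonneg[OF cj(1)] by simp
  then show ?case by (simp add: min_def)
qed simp

lemma chn_metric:
  assumes "chn S act a b n e" "\<forall>x y. m x y \<le> t * dist x y" "\<forall>x. \<forall>s\<in>S. m x (act s x) \<le> 1"
    "\<forall>x y z. m x z \<le> m x y + m y z" "\<forall>x. m x x = 0"
  shows "m a b \<le> real n + t * e"
  using assms(1)
proof (induction rule: chn.induct)
  case c0 then show ?case using assms by simp
next
  case (cm b n e b')
  have "m a b' \<le> m a b + m b b'" using assms by blast
  also have "m b b' \<le> t * dist b b'" using assms by blast
  finally show ?case using cm by (simp add: distrib_left)
next
  case (cj b n e s)
  have "m a (act s b) \<le> m a b + m b (act s b)" using assms by blast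
  also have "m b (act s b) \<le> 1" using assms cj by blast
  finally show ?case using cj by simp
qed

lemma chn_nonempty: "chn S act a b 0 (dist a b)"
  using chn.cm[OF chn.c0, of S act a b] by simp

lemma DD_le: "chn S act a b n e \<Longrightarrow> t \<ge> 0 \<Longrightarrow> DD S act t a b \<le> real n + t * e"
  unfolding DD_def
  by (rule cInf_lower) (auto intro!: bdd_belowI[of _ 0] dest: chn_nonneg)

lemma DD_lessD: "DD S act t a b < C \<Longrightarrow> \<exists>n e. chn S act a b n e \<and> real n + t * e < C"
proof -
  assume a: "DD S act t a b < C"
  have ne: "{real n + t * e | n e. chn S act a b n e} \<noteq> {}" using chn_nonempty[of S act a b] by blast
  from cInf_lessD[OF ne a[unfolded DD_def]] show ?thesis by blast
qed

lemma DD_geI: "(\<And>n e. chn S act a b n e \<Longrightarrow> C \<le> real n + t * e) \<Longrightarrow> C \<le> DD S act t a b"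
  unfolding DD_def using chn_nonempty[of S act a b]
  by (intro cInf_greatest) auto


lemma finite_eta:
  assumes "finite A" "\<forall>a\<in>A. \<exists>\<eta>>0. P a \<eta>"
    "\<And>a \<eta> \<eta>'. P a \<eta> \<Longrightarrow> 0 < \<eta>' \<Longrightarrow> \<eta>' \<le> \<eta> \<Longrightarrow> P a \<eta>'"
  shows "\<exists>\<eta>::real. \<eta> > 0 \<and> (\<forall>a\<in>A. P a \<eta>)"
  using assms(1,2)
proof (induction rule: finite_induct)
  case empty then show ?case by (intro exI[of _ 1]) auto
next
  case (insert a A)
  then obtain \<eta>1 where h1: "\<eta>1 > 0" "\<forall>b\<in>A. P b \<eta>1" by auto
  obtain \<eta>2 where h2: "\<eta>2 > 0" "P a \<eta>2" using insert by auto
  show ?case using h1 h2 assms(3)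
    by (intro exI[of _ "min \<eta>1 \<eta>2"]) (auto intro: assms(3))
qed

locale wsp =
  fixes G :: "'g monoid" (structure) and S :: "'g set" and act :: "'g \<Rightarrow> 'a::metric_space \<Rightarrow> 'a"
  assumes fg: "fg_group G S" and cpt: "compact (UNIV :: 'a set)"
    and fca: "free_continuous_action G act"
begin

sublocale group G using fg by (simp add: fg_group_def)

lemma ga: "group_action G UNIV act" using fca by (simp add: free_continuous_action_def)

lemma S_sub: "S \<subseteq> carrier G" and S_fin: "finite S" and S_inv: "s \<in> S \<Longrightarrow> inv s \<in> S"
  and S_gen: "generate G S = carrier G"
  using fg by (auto simp: fg_group_def)

lemma act_cont: "g \<in> carrier G \<Longrightarrow> continuous_on UNIV (act g)"
  using fca by (simp add: free_continuous_action_def)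

lemma act_free: "g \<in> carrier G \<Longrightarrow> act g y = y \<Longrightarrow> g = \<one>"
  using fca unfolding free_continuous_action_def by blast

lemma act_one: "act \<one> x = x"
  using fun_cong[OF group_action.id_eq_one[OF ga], of x] by simp

lemma act_mult: "g \<in> carrier G \<Longrightarrow> h \<in> carrier G \<Longrightarrow> act (g \<otimes> h) x = act g (act h x)"
  using group_action.composition_rule[OF ga] by simp

lemma act_inv: "g \<in> carrier G \<Longrightarrow> act (inv g) (act g x) = x"
  using group_action.orbit_sym_aux[OF ga] by simp

lemma act_eq_imp: "g \<in> carrier G \<Longrightarrow> h \<in> carrier G \<Longrightarrow> act g x = act h x \<Longrightarrow> g = h"
proof -
  assume g: "g \<in> carrier G" and h: "h \<in> carrier G" and e: "act g x = act h x"
  have "act (inv h \<otimes> g) x = x" using g h e by (simp add: act_mult act_inv)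
  then have "inv h \<otimes> g = \<one>" using act_free g h by simp
  then show "g = h" using g h by (metis inv_equality inv_inv l_inv_ex inv_closed)
qed

definition prodw :: "'g list \<Rightarrow> 'g" where
  "prodw xs = foldr (\<lambda>x y. x \<otimes> y) xs \<one>"

lemma prodw_simps[simp]: "prodw [] = \<one>" "prodw (x # xs) = x \<otimes> prodw xs"
  by (simp_all add: prodw_def)

lemma prodw_carrier: "set xs \<subseteq> S \<Longrightarrow> prodw xs \<in> carrier G"
  using S_sub by (induction xs) auto

lemma prodw_append: "set xs \<subseteq> S \<Longrightarrow> set ys \<subseteq> S \<Longrightarrow> prodw (xs @ ys) = prodw xs \<otimes> prodw ys"
  using S_sub by (induction xs) (auto simp: m_assoc prodw_carrier)

lemma word_exists: "g \<in> carrier G \<Longrightarrow> \<exists>xs. set xs \<subseteq> S \<and> prodw xs = g"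
proof -
  assume "g \<in> carrier G"
  then have "g \<in> generate G S" using S_gen by simp
  then show ?thesis
  proof (induction rule: generate.induct)
    case one then show ?case by (intro exI[of _ "[]"]) simp
  next
    case (incl h) then show ?case using S_sub by (intro exI[of _ "[h]"]) auto
  next
    case (inv h) then show ?case using S_sub S_inv by (intro exI[of _ "[inv h]"]) auto
  next
    case (eng h1 h2)
    then obtain xs ys where "set xs \<subseteq> S" "prodw xs = h1" "set ys \<subseteq> S" "prodw ys = h2" by blast
    then show ?case by (intro exI[of _ "xs @ ys"]) (simp add: prodw_append)
  qed
qed

lemma wl_def': "word_length G S g = (LEAST n. \<exists>xs. set xs \<subseteq> S \<and> length xs = n \<and> prodw xs = g)"
  unfolding word_length_def prodw_def ..

lemma wl_le: "set xs \<subseteq> S \<Longrightarrow> word_length G S (prodw xs) \<le> length xs"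
  unfolding wl_def' by (rule Least_le) auto

lemma wl_ex: "g \<in> carrier G \<Longrightarrow> \<exists>xs. set xs \<subseteq> S \<and> length xs = word_length G S g \<and> prodw xs = g"
proof -
  assume g: "g \<in> carrier G"
  obtain xs where "set xs \<subseteq> S" "prodw xs = g" using word_exists[OF g] by blast
  then have "\<exists>n xs. set xs \<subseteq> S \<and> length xs = n \<and> prodw xs = g" by blast
  from LeastI_ex[OF this] show ?thesis unfolding wl_def' .
qed

lemma wl_one: "word_length G S \<one> = 0"
  using wl_le[of "[]"] by simp

lemma finite_ball: "finite {g \<in> carrier G. word_length G S g \<le> N}"
proof -
  have "{g \<in> carrier G. word_length G S g \<le> N} \<subseteq> prodw ` {xs. set xs \<subseteq> S \<and> length xs \<le> N}"
  proof
    fix g assume "g \<in> {g \<in> carrier G. word_length G S g \<le> N}"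
    then have g: "g \<in> carrier G" "word_length G S g \<le> N" by auto
    obtain xs where "set xs \<subseteq> S" "length xs = word_length G S g" "prodw xs = g" using wl_ex[OF g(1)] by blast
    then show "g \<in> prodw ` {xs. set xs \<subseteq> S \<and> length xs \<le> N}" using g by force
  qed
  moreover have "finite {xs. set xs \<subseteq> S \<and> length xs \<le> N}"
    using finite_lists_length_le[OF S_fin] by simp
  ultimately show ?thesis using finite_subset by blast
qed

lemma chn_word: "set xs \<subseteq> S \<Longrightarrow> chn S act y (act (prodw xs) y) (length xs) 0"
proof (induction xs)
  case Nil then show ?case by (simp add: act_one chn.c0)
next
  case (Cons s xs)
  then have "chn S act y (act s (act (prodw xs) y)) (Suc (length xs)) 0"
    by (intro chn.cj) auto
  moreover have "act (s \<otimes> prodw xs) y = act s (act (prodw xs) y)"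
    using Cons S_sub prodw_carrier by (intro act_mult) auto
  ultimately show ?case by simp
qed

lemma chn_sym: "chn S act a b n e \<Longrightarrow> chn S act b a n e"
proof (induction rule: chn.induct)
  case c0 then show ?case by (rule chn.c0)
next
  case (cm b n e b')
  have "chn S act b' b 0 (dist b' b)" by (rule chn_nonempty)
  from chn_trans[OF cm(2) this] show ?case by (simp add: dist_commute add.commute)
next
  case (cj b n e s)
  have "chn S act (act s b) (act (inv s) (act s b)) (Suc 0) 0"
    using S_inv[OF cj(2)] by (intro chn.cj[OF chn.c0]) auto
  then have "chn S act (act s b) b (Suc 0) 0" using act_inv S_sub cj(2) by auto
  from chn_trans[OF cj(3) this] show ?case by simp
qed


lemma DD_nonneg: "t \<ge> 0 \<Longrightarrow> 0 \<le> DD S act t a b"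
  by (rule DD_geI) (auto dest: chn_nonneg)

lemma DD_refl: "t \<ge> 0 \<Longrightarrow> DD S act t a a = 0"
  using DD_le[OF chn.c0, of t S act a] DD_nonneg[of t a a] by simp

lemma DD_sym: "DD S act t a b = DD S act t b a"
  unfolding DD_def using chn_sym by metis

lemma DD_tri: assumes t: "t \<ge> 0" shows "DD S act t a c \<le> DD S act t a b + DD S act t b c"
proof -
  have "DD S act t a c - DD S act t a b \<le> DD S act t b c"
  proof (rule DD_geI)
    fix n2 e2 assume c2: "chn S act b c n2 e2"
    have "DD S act t a c - (real n2 + t * e2) \<le> DD S act t a b"
    proof (rule DD_geI)
      fix n1 e1 assume c1: "chn S act a b n1 e1"
      have "DD S act t a c \<le> real (n1 + n2) + t * (e1 + e2)"
        using DD_le[OF chn_trans[OF c2 c1] t] .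
      then show "DD S act t a c - (real n2 + t * e2) \<le> real n1 + t * e1"
        by (simp add: distrib_left)
    qed
    then show "DD S act t a c - DD S act t a b \<le> real n2 + t * e2" by simp
  qed
  then show ?thesis by simp
qed

lemma DD_min: "t > 0 \<Longrightarrow> min 1 (t * dist a b) \<le> DD S act t a b"
  by (rule DD_geI) (rule chn_lower)

lemma DD_pos: "t > 0 \<Longrightarrow> DD S act t a b = 0 \<Longrightarrow> a = b"
proof (rule ccontr)
  assume t: "t > 0" and z: "DD S act t a b = 0" and ne: "a \<noteq> b"
  have "t * dist a b > 0" using t ne by simp
  then show False using DD_min[OF t, of a b] z by (simp add: min_def split: if_splits)
qed

lemma DD_dist: "t \<ge> 0 \<Longrightarrow> DD S act t a b \<le> t * dist a b"
  using DD_le[OF chn_nonempty] by simp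

lemma DD_gen: "t \<ge> 0 \<Longrightarrow> s \<in> S \<Longrightarrow> DD S act t a (act s a) \<le> 1"
proof -
  assume "t \<ge> 0" "s \<in> S"
  moreover have "chn S act a (act s a) (Suc 0) 0" using \<open>s \<in> S\<close> by (rule chn.cj[OF chn.c0])
  ultimately show ?thesis using DD_le by fastforce
qed

lemma DD_word: "t \<ge> 0 \<Longrightarrow> set xs \<subseteq> S \<Longrightarrow> DD S act t y (act (prodw xs) y) \<le> length xs"
  using DD_le[OF chn_word] by simp

lemma DD_wl: "t \<ge> 0 \<Longrightarrow> g \<in> carrier G \<Longrightarrow> DD S act t y (act g y) \<le> word_length G S g"
  using DD_word wl_ex by metis

lemma warped_eq: assumes t: "t > 0" shows "warped_dist S act t a b = DD S act t a b"
proof -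
  let ?M = "{m a b | m. is_metric m \<and> (\<forall>a b. m a b \<le> t * dist a b) \<and> (\<forall>a. \<forall>s\<in>S. m a (act s a) \<le> 1)}"
  have "is_metric (DD S act t)"
    unfolding is_metric_def using t DD_refl DD_pos DD_sym DD_tri
    by (metis less_imp_le)
  then have "DD S act t a b \<in> ?M" using t DD_dist DD_gen by (force intro!: exI[of _ "DD S act t"])
  moreover have "x \<le> DD S act t a b" if "x \<in> ?M" for x
  proof -
    obtain m where m: "x = m a b" "is_metric m" "\<forall>a b. m a b \<le> t * dist a b" "\<forall>a. \<forall>s\<in>S. m a (act s a) \<le> 1"
      using \<open>x \<in> ?M\<close> by blast
    have "\<forall>x y z. m x z \<le> m x y + m y z" "\<forall>x. m x x = 0" using m(2) unfolding is_metric_def by auto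
    then show ?thesis unfolding m(1) using m by (intro DD_geI chn_metric) auto
  qed
  ultimately show ?thesis unfolding warped_dist_def by (intro cSup_eq_maximum) auto
qed


lemma unif_S: "\<epsilon> > 0 \<Longrightarrow> \<exists>\<zeta>>0. \<forall>s\<in>S. \<forall>u v. dist u v < \<zeta> \<longrightarrow> dist (act s u) (act s v) < \<epsilon>"
proof -
  assume e: "\<epsilon> > 0"
  have "\<forall>s\<in>S. \<exists>\<zeta>>0. \<forall>u v. dist u v < \<zeta> \<longrightarrow> dist (act s u) (act s v) < \<epsilon>"
  proof
    fix s assume "s \<in> S"
    then have "uniformly_continuous_on UNIV (act s)"
      using act_cont S_sub cpt by (intro compact_uniformly_continuous) auto
    then show "\<exists>\<zeta>>0. \<forall>u v. dist u v < \<zeta> \<longrightarrow> dist (act s u) (act s v) < \<epsilon>"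
      unfolding uniformly_continuous_on_def using e by (metis UNIV_I dist_commute)
  qed
  from finite_eta[OF S_fin this] show ?thesis by force
qed

lemma approx: "\<epsilon> > 0 \<Longrightarrow> \<exists>\<eta>>0. \<forall>x x' e. chn S act x x' n e \<longrightarrow> e < \<eta> \<longrightarrow>
   (\<exists>xs. set xs \<subseteq> S \<and> length xs = n \<and> dist x' (act (prodw xs) x) < \<epsilon>)"
proof (induction n arbitrary: \<epsilon>)
  case 0
  show ?case
  proof (intro exI[of _ \<epsilon>] conjI allI impI)
    fix x x' e assume "chn S act x x' 0 e" "e < \<epsilon>"
    then have "dist x x' < \<epsilon>" using chn_zero by fastforce
    then show "\<exists>xs. set xs \<subseteq> S \<and> length xs = 0 \<and> dist x' (act (prodw xs) x) < \<epsilon>"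
      by (intro exI[of _ "[]"]) (simp add: act_one dist_commute)
  qed (use 0 in auto)
next
  case (Suc n)
  have e2: "\<epsilon>/2 > 0" using Suc by simp
  obtain \<zeta> where z: "\<zeta> > 0" "\<forall>s\<in>S. \<forall>u v. dist u v < \<zeta> \<longrightarrow> dist (act s u) (act s v) < \<epsilon>/2"
    using unif_S[OF e2] by blast
  obtain \<eta>1 where h1: "\<eta>1 > 0" "\<forall>x x' e. chn S act x x' n e \<longrightarrow> e < \<eta>1 \<longrightarrow>
     (\<exists>xs. set xs \<subseteq> S \<and> length xs = n \<and> dist x' (act (prodw xs) x) < \<zeta>)"
    using Suc.IH[OF z(1)] by blast
  show ?case
  proof (intro exI[of _ "min \<eta>1 (\<epsilon>/2)"] conjI allI impI)
    show "min \<eta>1 (\<epsilon>/2) > 0" using h1 e2 by simp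
  next
    fix x x' e assume c: "chn S act x x' (Suc n) e" and el: "e < min \<eta>1 (\<epsilon>/2)"
    obtain c s e1 where cs: "chn S act x c n e1" "s \<in> S" "e1 + dist (act s c) x' \<le> e"
      using chn_suc[OF c] by blast
    have "e1 \<ge> 0" using chn_nonneg[OF cs(1)] .
    then have "e1 < \<eta>1" "dist (act s c) x' < \<epsilon>/2" using cs(3) el by (auto simp: dist_commute)
      (smt (verit) zero_le_dist)+
    then obtain xs where xs: "set xs \<subseteq> S" "length xs = n" "dist c (act (prodw xs) x) < \<zeta>"
      using h1 cs(1) by blast
    have d2: "dist (act s c) (act s (act (prodw xs) x)) < \<epsilon>/2" using z cs(2) xs(3) by blast
    have eq: "act (prodw (s # xs)) x = act s (act (prodw xs) x)"
      using cs(2) S_sub prodw_carrier[OF xs(1)] by (simp add: act_mult subset_iff)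
    have "dist x' (act (prodw (s # xs)) x) \<le> dist x' (act s c) + dist (act s c) (act s (act (prodw xs) x))"
      unfolding eq by (rule dist_triangle)
    also have "\<dots> < \<epsilon>" using d2 \<open>dist (act s c) x' < \<epsilon>/2\<close> by (simp add: dist_commute)
    finally show "\<exists>xs. set xs \<subseteq> S \<and> length xs = Suc n \<and> dist x' (act (prodw xs) x) < \<epsilon>"
      using xs cs(2) by (intro exI[of _ "s # xs"]) auto
  qed
qed


lemma exact:
  assumes H: "\<forall>M. \<exists>t>M. DD S act t x x' \<le> C"
  shows "\<exists>xs. set xs \<subseteq> S \<and> real (length xs) \<le> C \<and> x' = act (prodw xs) x"
proof (rule ccontr)
  assume nex: "\<not> ?thesis"
  obtain t0 where "t0 > 0" "DD S act t0 x x' \<le> C" using H by blast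
  then have C0: "C \<ge> 0" using DD_nonneg[of t0 x x'] by simp
  define N where "N = nat \<lfloor>C\<rfloor>"
  have lenN: "real n \<le> C \<longleftrightarrow> n \<le> N" for n unfolding N_def using C0 by linarith
  define Ws where "Ws = {xs. set xs \<subseteq> S \<and> length xs \<le> N}"
  have fW: "finite Ws" unfolding Ws_def using finite_lists_length_le[OF S_fin] by simp
  have neW: "[] \<in> Ws" unfolding Ws_def by simp
  define F where "F = (\<lambda>xs. dist x' (act (prodw xs) x))"
  define \<epsilon> where "\<epsilon> = Min (F ` Ws)"
  have Fpos: "F xs > 0" if "xs \<in> Ws" for xs
    using nex that lenN unfolding Ws_def F_def by auto
  have ep: "\<epsilon> > 0" unfolding \<epsilon>_def using fW neW Fpos by (subst Min_gr_iff) auto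
  have epl: "\<epsilon> \<le> F xs" if "xs \<in> Ws" for xs unfolding \<epsilon>_def using fW that by simp
  have "\<forall>n\<in>{..N}. \<exists>\<eta>>0. \<forall>x x' e. chn S act x x' n e \<longrightarrow> e < \<eta> \<longrightarrow>
     (\<exists>xs. set xs \<subseteq> S \<and> length xs = n \<and> dist x' (act (prodw xs) x) < \<epsilon>)"
    using approx[OF ep] by blast
  from finite_eta[OF _ this] obtain \<eta> where eta: "\<eta> > 0" "\<forall>n\<in>{..N}. \<forall>x x' e. chn S act x x' n e \<longrightarrow> e < \<eta> \<longrightarrow>
     (\<exists>xs. set xs \<subseteq> S \<and> length xs = n \<and> dist x' (act (prodw xs) x) < \<epsilon>)"
    by force
  obtain t where t: "t > max 0 ((real N + 1)/\<eta>)" "DD S act t x x' \<le> C" using H by blast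
  have tp: "t > 0" using t by simp
  have "C < real N + 1" unfolding N_def using C0 by linarith
  then have "DD S act t x x' < real N + 1" using t by simp
  then obtain n e where ne: "chn S act x x' n e" "real n + t * e < real N + 1" using DD_lessD by blast
  have e0: "e \<ge> 0" using chn_nonneg[OF ne(1)] .
  have "t * e \<ge> 0" using e0 tp by simp
  then have "real n < real N + 1" using ne by simp
  then have nN: "n \<le> N" by linarith
  have "t * e < real N + 1" using ne by simp
  moreover have "real N + 1 < t * \<eta>" using t eta(1) by (simp add: field_simps)
  ultimately have "t * e < t * \<eta>" by simp
  then have "e < \<eta>" using tp by simp
  then obtain xs where xs: "set xs \<subseteq> S" "length xs = n" "dist x' (act (prodw xs) x) < \<epsilon>"
    using eta(2) nN ne(1) by blast
  then have "xs \<in> Ws" unfolding Ws_def using nN by simp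
  then show False using epl xs(3) unfolding F_def by force
qed

end




lemma (in wsp) bound_word:
  assumes g: "g \<in> carrier G" and H: "\<forall>M. \<exists>t>M. DD S act t y (act g y) \<le> C"
  shows "real (word_length G S g) \<le> C"
proof -
  obtain xs where xs: "set xs \<subseteq> S" "real (length xs) \<le> C" "act g y = act (prodw xs) y"
    using exact[OF H] by blast
  then have "g = prodw xs" using act_eq_imp g prodw_carrier by blast
  then show ?thesis using wl_le[OF xs(1)] xs(2) by simp
qed

lemma (in wsp) infinite_long:
  assumes "infinite (carrier G)" shows "\<exists>g\<in>carrier G. r < real (word_length G S g)"
proof (rule ccontr)
  assume "\<not> ?thesis"
  then have "carrier G \<subseteq> {g \<in> carrier G. word_length G S g \<le> nat \<lceil>r\<rceil>}"
    by (auto simp: not_less le_nat_iff le_ceiling_iff)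
  then show False using finite_ball assms finite_subset by blast
qed

lemma control_shift: "control_fun (\<lambda>r. max 0 (r - M))"
  unfolding control_fun_def
proof (intro conjI allI impI)
  show "mono_on {0..} (\<lambda>r. max 0 (r - M))" by (auto intro!: mono_onI)
  show "filterlim (\<lambda>r::real. max 0 (r - M)) at_top at_top"
    unfolding filterlim_at_top eventually_at_top_linorder
  proof
    fix Z :: real show "\<exists>N. \<forall>n\<ge>N. Z \<le> max 0 (n - M)"
      by (intro exI[of _ "Z + M"]) auto
  qed
qed simp

lemma lower_control:
  fixes \<phi> :: "'a \<Rightarrow> 'b \<Rightarrow> nat" and w :: "'a \<Rightarrow> nat"
  assumes ex: "\<forall>r::real. \<exists>a\<in>A. r \<le> real (w a)"
    and bd: "\<forall>K. \<exists>B. \<forall>a\<in>A. \<forall>y. \<phi> a y \<le> K \<longrightarrow> real (w a) \<le> B"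
  shows "\<exists>\<rho>. control_fun \<rho> \<and> (\<forall>a\<in>A. \<forall>y. \<rho> (real (w a)) \<le> real (\<phi> a y))"
proof -
  define P where "P = (\<lambda>r k. \<exists>a\<in>A. \<exists>y. r \<le> real (w a) \<and> k = \<phi> a y)"
  define \<rho> where "\<rho> = (\<lambda>r. real (LEAST k. P r k))"
  have Pex: "\<exists>k. P r k" for r using ex unfolding P_def by blast
  have PL: "P r (LEAST k. P r k)" for r using LeastI_ex[OF Pex] .
  have mono: "\<rho> r1 \<le> \<rho> r2" if "r1 \<le> r2" for r1 r2
  proof -
    have "P r1 (LEAST k. P r2 k)" using PL[of r2] that unfolding P_def by force
    then show ?thesis unfolding \<rho>_def by (simp add: Least_le)
  qed
  have bnd: "\<rho> (real (w a)) \<le> real (\<phi> a y)" if "a \<in> A" for a y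
  proof -
    have "P (real (w a)) (\<phi> a y)" unfolding P_def using that by blast
    then have "(LEAST k. P (real (w a)) k) \<le> \<phi> a y" by (rule Least_le)
    then show ?thesis unfolding \<rho>_def by simp
  qed
  have lim: "filterlim \<rho> at_top at_top"
    unfolding filterlim_at_top eventually_at_top_linorder
  proof
    fix Z :: real
    obtain B where B: "\<forall>a\<in>A. \<forall>y. \<phi> a y \<le> nat \<lceil>Z\<rceil> \<longrightarrow> real (w a) \<le> B" using bd by blast
    show "\<exists>N. \<forall>n\<ge>N. Z \<le> \<rho> n"
    proof (intro exI[of _ "B + 1"] allI impI)
      fix n assume n: "n \<ge> B + 1"
      obtain a y where ay: "a \<in> A" "n \<le> real (w a)" "(LEAST k. P n k) = \<phi> a y"
        using PL[of n] unfolding P_def by blast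
      have "\<not> \<phi> a y \<le> nat \<lceil>Z\<rceil>" using B ay n by force
      then have "Z \<le> real (\<phi> a y)" by linarith
      then show "Z \<le> \<rho> n" unfolding \<rho>_def ay(3) .
    qed
  qed
  have "control_fun \<rho>" unfolding control_fun_def
    using mono lim by (auto intro!: mono_onI simp: \<rho>_def)
  then show ?thesis using bnd by blast
qed

lemma cocycle_to_ce:
  fixes act :: "'g \<Rightarrow> 'y \<Rightarrow> 'y" and \<delta> :: "'g \<Rightarrow> 'y \<Rightarrow> 'h"
  assumes G: "group \<Gamma>" and H: "group \<Delta>" and ga: "group_action \<Gamma> UNIV act"
    and coc: "cocycle \<Gamma> \<Delta> act \<delta>" and cm: "control_fun \<rho>m" and cp: "control_fun \<rho>p"
    and bnd: "\<forall>\<gamma>\<in>carrier \<Gamma>. \<forall>y.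
                  \<rho>m (real (word_length \<Gamma> S \<gamma>)) \<le> real (word_length \<Delta> T (\<delta> \<gamma> y)) \<and>
                  real (word_length \<Delta> T (\<delta> \<gamma> y)) \<le> \<rho>p (real (word_length \<Gamma> S \<gamma>))"
  shows "\<exists>\<phi>. coarse_embedding \<Gamma> S \<Delta> T \<phi>"
proof -
  interpret G: group \<Gamma> by (rule G)
  interpret H: group \<Delta> by (rule H)
  have dc: "\<delta> g y \<in> carrier \<Delta>" if "g \<in> carrier \<Gamma>" for g y using coc that unfolding cocycle_def by blast
  have cr: "\<delta> g2 (act g1 y) \<otimes>\<^bsub>\<Delta>\<^esub> \<delta> g1 y = \<delta> (g2 \<otimes>\<^bsub>\<Gamma>\<^esub> g1) y"
    if "g1 \<in> carrier \<Gamma>" "g2 \<in> carrier \<Gamma>" for g1 g2 y using coc that unfolding cocycle_def by blast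
  have a1: "act \<one>\<^bsub>\<Gamma>\<^esub> x = x" for x using fun_cong[OF group_action.id_eq_one[OF ga], of x] by simp
  have am: "act (g \<otimes>\<^bsub>\<Gamma>\<^esub> h) x = act g (act h x)" if "g \<in> carrier \<Gamma>" "h \<in> carrier \<Gamma>" for g h x
    using group_action.composition_rule[OF ga] that by simp
  have d1: "\<delta> \<one>\<^bsub>\<Gamma>\<^esub> y = \<one>\<^bsub>\<Delta>\<^esub>" for y
  proof -
    have "\<delta> \<one>\<^bsub>\<Gamma>\<^esub> y \<otimes>\<^bsub>\<Delta>\<^esub> \<delta> \<one>\<^bsub>\<Gamma>\<^esub> y = \<delta> \<one>\<^bsub>\<Gamma>\<^esub> y \<otimes>\<^bsub>\<Delta>\<^esub> \<one>\<^bsub>\<Delta>\<^esub>"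
      using cr[of "\<one>\<^bsub>\<Gamma>\<^esub>" "\<one>\<^bsub>\<Gamma>\<^esub>" y] a1 dc by simp
    then have "\<delta> \<one>\<^bsub>\<Gamma>\<^esub> y \<otimes>\<^bsub>\<Delta>\<^esub> \<delta> \<one>\<^bsub>\<Gamma>\<^esub> y = \<delta> \<one>\<^bsub>\<Gamma>\<^esub> y" using dc[of "\<one>\<^bsub>\<Gamma>\<^esub>" y] by simp
    then show ?thesis using dc[of "\<one>\<^bsub>\<Gamma>\<^esub>" y] H.l_cancel_one by simp
  qed
  define y0 where "y0 = (undefined :: 'y)"
  define \<phi> where "\<phi> = (\<lambda>g. inv\<^bsub>\<Delta>\<^esub> (\<delta> (inv\<^bsub>\<Gamma>\<^esub> g) y0))"
  have key: "inv\<^bsub>\<Delta>\<^esub> \<phi> g \<otimes>\<^bsub>\<Delta>\<^esub> \<phi> h = \<delta> (inv\<^bsub>\<Gamma>\<^esub> g \<otimes>\<^bsub>\<Gamma>\<^esub> h) (act (inv\<^bsub>\<Gamma>\<^esub> h) y0)"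
    if g: "g \<in> carrier \<Gamma>" and h: "h \<in> carrier \<Gamma>" for g h
  proof -
    define z where "z = act (inv\<^bsub>\<Gamma>\<^esub> h) y0"
    have hz: "act h z = y0" unfolding z_def using am[of h "inv\<^bsub>\<Gamma>\<^esub> h" y0] h a1 by simp
    have "\<delta> h z \<otimes>\<^bsub>\<Delta>\<^esub> \<delta> (inv\<^bsub>\<Gamma>\<^esub> h) y0 = \<one>\<^bsub>\<Delta>\<^esub>"
      using cr[of "inv\<^bsub>\<Gamma>\<^esub> h" h y0] h d1 unfolding z_def by simp
    then have e1: "\<delta> h z = \<phi> h" unfolding \<phi>_def using h dc
      by (metis G.inv_closed H.inv_equality)
    have e2: "inv\<^bsub>\<Delta>\<^esub> \<phi> g = \<delta> (inv\<^bsub>\<Gamma>\<^esub> g) y0" unfolding \<phi>_def using g dc by simp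
    show ?thesis unfolding e2 e1[symmetric] z_def[symmetric]
      using cr[of h "inv\<^bsub>\<Gamma>\<^esub> g" z] g h hz by simp
  qed
  have A: "\<phi> \<in> carrier \<Gamma> \<rightarrow> carrier \<Delta>" unfolding \<phi>_def using dc by auto
  have B: "\<forall>g\<in>carrier \<Gamma>. \<forall>h\<in>carrier \<Gamma>.
          \<rho>m (real (word_length \<Gamma> S (inv\<^bsub>\<Gamma>\<^esub> g \<otimes>\<^bsub>\<Gamma>\<^esub> h)))
            \<le> real (word_length \<Delta> T (inv\<^bsub>\<Delta>\<^esub> \<phi> g \<otimes>\<^bsub>\<Delta>\<^esub> \<phi> h)) \<and>
          real (word_length \<Delta> T (inv\<^bsub>\<Delta>\<^esub> \<phi> g \<otimes>\<^bsub>\<Delta>\<^esub> \<phi> h))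
            \<le> \<rho>p (real (word_length \<Gamma> S (inv\<^bsub>\<Gamma>\<^esub> g \<otimes>\<^bsub>\<Gamma>\<^esub> h)))"
  proof (intro ballI)
    fix g h assume gh: "g \<in> carrier \<Gamma>" "h \<in> carrier \<Gamma>"
    then have "inv\<^bsub>\<Gamma>\<^esub> g \<otimes>\<^bsub>\<Gamma>\<^esub> h \<in> carrier \<Gamma>" by simp
    from bnd[rule_format, OF this, of "act (inv\<^bsub>\<Gamma>\<^esub> h) y0"] key[OF gh]
    show "\<rho>m (real (word_length \<Gamma> S (inv\<^bsub>\<Gamma>\<^esub> g \<otimes>\<^bsub>\<Gamma>\<^esub> h)))
            \<le> real (word_length \<Delta> T (inv\<^bsub>\<Delta>\<^esub> \<phi> g \<otimes>\<^bsub>\<Delta>\<^esub> \<phi> h)) \<and>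
          real (word_length \<Delta> T (inv\<^bsub>\<Delta>\<^esub> \<phi> g \<otimes>\<^bsub>\<Delta>\<^esub> \<phi> h))
            \<le> \<rho>p (real (word_length \<Gamma> S (inv\<^bsub>\<Gamma>\<^esub> g \<otimes>\<^bsub>\<Gamma>\<^esub> h)))" by simp
  qed
  have "coarse_embedding \<Gamma> S \<Delta> T \<phi>"
    unfolding coarse_embedding_def using A B cm cp by blast
  then show ?thesis by blast
qed



theorem corollary4p10:
  fixes \<Gamma> :: "'g monoid" and S :: "'g set"
    and \<Delta> :: "'h monoid" and T :: "'h set"
    and actY :: "'g \<Rightarrow> 'y::metric_space \<Rightarrow> 'y"
    and actX :: "'h \<Rightarrow> 'x::metric_space \<Rightarrow> 'x"
    and f :: "'y \<Rightarrow> 'x"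
    and I :: "'i set" and t \<tau> :: "'i \<Rightarrow> real"
    and \<sigma>m \<sigma>p :: "real \<Rightarrow> real"
  assumes "fg_group \<Gamma> S" and "fg_group \<Delta> T"
    and "compact (UNIV :: 'y set)" and "compact (UNIV :: 'x set)"
    and "free_continuous_action \<Gamma> actY" and "free_continuous_action \<Delta> actX"
    and "t ` I = {0<..}" and "\<forall>i\<in>I. \<tau> i > 0"
    and "control_fun \<sigma>m" and "control_fun \<sigma>p"
    and "\<forall>i\<in>I. \<forall>y y'.
           \<sigma>m (warped_dist S actY (t i) y y') \<le> warped_dist T actX (\<tau> i) (f y) (f y') \<and>
           warped_dist T actX (\<tau> i) (f y) (f y') \<le> \<sigma>p (warped_dist S actY (t i) y y')"
  shows "(\<exists>\<delta> :: 'g \<Rightarrow> 'y \<Rightarrow> 'h. cocycle \<Gamma> \<Delta> actY \<delta> \<and>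
            (continuous_on UNIV f \<longrightarrow>
               (\<forall>\<gamma>\<in>carrier \<Gamma>. \<forall>y. \<forall>\<^sub>F y' in nhds y. \<delta> \<gamma> y' = \<delta> \<gamma> y)) \<and>
            (\<exists>\<rho>m \<rho>p. control_fun \<rho>m \<and> control_fun \<rho>p \<and>
               (\<forall>\<gamma>\<in>carrier \<Gamma>. \<forall>y.
                  \<rho>m (real (word_length \<Gamma> S \<gamma>)) \<le> real (word_length \<Delta> T (\<delta> \<gamma> y)) \<and>
                  real (word_length \<Delta> T (\<delta> \<gamma> y)) \<le> \<rho>p (real (word_length \<Gamma> S \<gamma>)))))
         \<and> (\<exists>\<phi>. coarse_embedding \<Gamma> S \<Delta> T \<phi>)"
proof -
  interpret Y: wsp \<Gamma> S actY using assms(1,3,5) by unfold_locales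
  interpret X: wsp \<Delta> T actX using assms(2,4,6) by unfold_locales
  have tpos: "t i > 0" if "i \<in> I" for i using assms(7) that by auto
  have taupos: "\<tau> i > 0" if "i \<in> I" for i using assms(8) that by auto
  have lev: "\<exists>i\<in>I. t i = t'" if "t' > 0" for t' using assms(7) that
    by (metis greaterThan_iff imageE)
  have hyp: "\<sigma>m (DD S actY (t i) y y') \<le> DD T actX (\<tau> i) (f y) (f y') \<and>
      DD T actX (\<tau> i) (f y) (f y') \<le> \<sigma>p (DD S actY (t i) y y')" if "i \<in> I" for i y y'
    using assms(11) that Y.warped_eq[OF tpos[OF that]] X.warped_eq[OF taupos[OF that]] by metis
  have sm_big: "\<exists>L. \<forall>x\<ge>L. \<sigma>m x > K" for K
  proof -
    have "filterlim \<sigma>m at_top at_top" using assms(9) unfolding control_fun_def by blast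
    then have "\<forall>\<^sub>F x in at_top. K + 1 \<le> \<sigma>m x" unfolding filterlim_at_top by blast
    then obtain L where "\<forall>x\<ge>L. K + 1 \<le> \<sigma>m x" unfolding eventually_at_top_linorder by blast
    then show ?thesis by (intro exI[of _ L]) force
  qed
  have sp_mono: "\<sigma>p a \<le> \<sigma>p b" if "0 \<le> a" "a \<le> b" for a b
  proof -
    have "mono_on {0..} \<sigma>p" using assms(10) unfolding control_fun_def by blast
    then show ?thesis by (rule mono_onD) (use that in auto)
  qed
  have sp_nonneg: "\<sigma>p a \<ge> 0" if "a \<ge> 0" for a using assms(10) that unfolding control_fun_def by auto
  have S1: "real (word_length \<Gamma> S g) \<le> C"
    if g: "g \<in> carrier \<Gamma>" and H: "\<forall>i\<in>I. DD S actY (t i) y (actY g y) \<le> C" for g y C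
  proof (rule Y.bound_word[OF g])
    show "\<forall>M. \<exists>t'>M. DD S actY t' y (actY g y) \<le> C"
    proof
      fix M :: real
      have "0 < max M 0 + 1" by simp
      then obtain i where "i \<in> I" "t i = max M 0 + 1" using lev by blast
      then show "\<exists>t'>M. DD S actY t' y (actY g y) \<le> C" using H by (intro exI[of _ "t i"]) auto
    qed
  qed
  show ?thesis
  proof (cases "finite (carrier \<Gamma>)")
    case True
    define M where "M = Max (word_length \<Gamma> S ` carrier \<Gamma>)"
    define \<delta> where "\<delta> = (\<lambda>(g::'g) (y::'y). \<one>\<^bsub>\<Delta>\<^esub>)"
    have coc: "cocycle \<Gamma> \<Delta> actY \<delta>" unfolding cocycle_def \<delta>_def by simp
    have bnd: "\<forall>\<gamma>\<in>carrier \<Gamma>. \<forall>y.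
                  (\<lambda>r. max 0 (r - real M)) (real (word_length \<Gamma> S \<gamma>)) \<le> real (word_length \<Delta> T (\<delta> \<gamma> y)) \<and>
                  real (word_length \<Delta> T (\<delta> \<gamma> y)) \<le> \<sigma>p (real (word_length \<Gamma> S \<gamma>))"
    proof (intro ballI allI)
      fix \<gamma> y assume g: "\<gamma> \<in> carrier \<Gamma>"
      have "word_length \<Gamma> S \<gamma> \<le> M" unfolding M_def using True g by simp
      then show "(\<lambda>r. max 0 (r - real M)) (real (word_length \<Gamma> S \<gamma>)) \<le> real (word_length \<Delta> T (\<delta> \<gamma> y)) \<and>
                  real (word_length \<Delta> T (\<delta> \<gamma> y)) \<le> \<sigma>p (real (word_length \<Gamma> S \<gamma>))"
        unfolding \<delta>_def using X.wl_one sp_nonneg[of "real (word_length \<Gamma> S \<gamma>)"] by simp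
    qed
    have ce: "\<exists>\<phi>. coarse_embedding \<Gamma> S \<Delta> T \<phi>"
      by (rule cocycle_to_ce[OF Y.is_group X.is_group Y.ga coc control_shift assms(10) bnd])
    have rr: "\<exists>\<rho>m \<rho>p. control_fun \<rho>m \<and> control_fun \<rho>p \<and>
               (\<forall>\<gamma>\<in>carrier \<Gamma>. \<forall>y.
                  \<rho>m (real (word_length \<Gamma> S \<gamma>)) \<le> real (word_length \<Delta> T (\<delta> \<gamma> y)) \<and>
                  real (word_length \<Delta> T (\<delta> \<gamma> y)) \<le> \<rho>p (real (word_length \<Gamma> S \<gamma>)))"
      using bnd control_shift[of "real M"] assms(10) by blast
    have lcf: "\<forall>\<gamma>\<in>carrier \<Gamma>. \<forall>y. \<forall>\<^sub>F y' in nhds y. \<delta> \<gamma> y' = \<delta> \<gamma> y" by (simp add: \<delta>_def)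
    show ?thesis using coc lcf rr ce by blast
  next
    case False
    have S2: "\<exists>i\<in>I. \<tau> i > M" for M
    proof (rule ccontr)
      assume "\<not> ?thesis"
      then have tb: "\<forall>i\<in>I. \<tau> i \<le> M" by auto
      obtain B where B: "\<forall>x x'. dist (x::'x) x' \<le> B"
        using compact_imp_bounded[OF assms(4)] unfolding bounded_two_points by blast
      obtain i0 where i0: "i0 \<in> I" using lev[of 1] by auto
      have M0: "M \<ge> 0" using tb i0 taupos[OF i0] by force
      obtain L where L: "\<forall>x\<ge>L. \<sigma>m x > M * B" using sm_big by blast
      have "real (word_length \<Gamma> S g) \<le> L" if g: "g \<in> carrier \<Gamma>" for g
      proof (rule S1[OF g, of undefined])
        show "\<forall>i\<in>I. DD S actY (t i) undefined (actY g undefined) \<le> L"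
        proof (rule ballI, rule ccontr)
          fix i assume i: "i \<in> I" and "\<not> DD S actY (t i) undefined (actY g undefined) \<le> L"
          then have "\<sigma>m (DD S actY (t i) undefined (actY g undefined)) > M * B" using L by auto
          moreover have "\<sigma>m (DD S actY (t i) undefined (actY g undefined)) \<le> \<tau> i * dist (f undefined) (f (actY g undefined))"
            using hyp[OF i] X.DD_dist[of "\<tau> i"] taupos[OF i] by (meson less_imp_le order_trans)
          moreover have "\<tau> i * dist (f undefined) (f (actY g undefined)) \<le> M * B"
            using tb i B M0 taupos[OF i] by (meson mult_mono zero_le_dist less_imp_le)
          ultimately show False by simp
        qed
      qed
      then show False using Y.infinite_long[OF False, of L] by force
    qed
    have S3: "\<exists>xs. set xs \<subseteq> T \<and> real (length xs) \<le> \<sigma>p (real (word_length \<Gamma> S g)) \<and>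
               f (actY g y) = actX (X.prodw xs) (f y)" if g: "g \<in> carrier \<Gamma>" for g y
    proof (rule X.exact, rule allI)
      fix M
      obtain i where i: "i \<in> I" "\<tau> i > M" using S2 by blast
      have "DD T actX (\<tau> i) (f y) (f (actY g y)) \<le> \<sigma>p (DD S actY (t i) y (actY g y))" using hyp[OF i(1)] by blast
      also have "\<dots> \<le> \<sigma>p (real (word_length \<Gamma> S g))"
        using Y.DD_nonneg Y.DD_wl g tpos[OF i(1)] by (intro sp_mono) (auto simp: less_imp_le)
      finally show "\<exists>t'>M. DD T actX t' (f y) (f (actY g y)) \<le> \<sigma>p (real (word_length \<Gamma> S g))"
        using i by blast
    qed
    define \<delta> where "\<delta> = (\<lambda>g y. THE d. d \<in> carrier \<Delta> \<and> f (actY g y) = actX d (f y))"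
    have dp: "\<delta> g y \<in> carrier \<Delta> \<and> f (actY g y) = actX (\<delta> g y) (f y) \<and>
        real (word_length \<Delta> T (\<delta> g y)) \<le> \<sigma>p (real (word_length \<Gamma> S g))" if g: "g \<in> carrier \<Gamma>" for g y
    proof -
      obtain xs where xs: "set xs \<subseteq> T" "real (length xs) \<le> \<sigma>p (real (word_length \<Gamma> S g))"
        "f (actY g y) = actX (X.prodw xs) (f y)" using S3[OF g] by blast
      have pc: "X.prodw xs \<in> carrier \<Delta>" using X.prodw_carrier[OF xs(1)] .
      have "\<delta> g y = X.prodw xs" unfolding \<delta>_def
      proof (rule the_equality)
        show "X.prodw xs \<in> carrier \<Delta> \<and> f (actY g y) = actX (X.prodw xs) (f y)" using pc xs by simp
      next
        fix d assume "d \<in> carrier \<Delta> \<and> f (actY g y) = actX d (f y)"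
        then show "d = X.prodw xs" using X.act_eq_imp pc xs(3) by metis
      qed
      then show ?thesis using pc xs X.wl_le[OF xs(1)] by simp
    qed
    have coc: "cocycle \<Gamma> \<Delta> actY \<delta>" unfolding cocycle_def
    proof (intro conjI ballI allI)
      fix g y assume "g \<in> carrier \<Gamma>" then show "\<delta> g y \<in> carrier \<Delta>" using dp by blast
    next
      fix g1 g2 y assume g: "g1 \<in> carrier \<Gamma>" "g2 \<in> carrier \<Gamma>"
      have "actX (\<delta> (g2 \<otimes>\<^bsub>\<Gamma>\<^esub> g1) y) (f y) = f (actY (g2 \<otimes>\<^bsub>\<Gamma>\<^esub> g1) y)" using dp g by simp
      also have "\<dots> = f (actY g2 (actY g1 y))" using Y.act_mult g by simp
      also have "\<dots> = actX (\<delta> g2 (actY g1 y)) (actX (\<delta> g1 y) (f y))" using dp g by simp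
      also have "\<dots> = actX (\<delta> g2 (actY g1 y) \<otimes>\<^bsub>\<Delta>\<^esub> \<delta> g1 y) (f y)" using X.act_mult dp g by simp
      finally show "\<delta> g2 (actY g1 y) \<otimes>\<^bsub>\<Delta>\<^esub> \<delta> g1 y = \<delta> (g2 \<otimes>\<^bsub>\<Gamma>\<^esub> g1) y"
        using X.act_eq_imp dp g by (metis X.m_closed Y.m_closed)
    qed
    have lc: "\<forall>\<gamma>\<in>carrier \<Gamma>. \<forall>y. \<forall>\<^sub>F y' in nhds y. \<delta> \<gamma> y' = \<delta> \<gamma> y" if fc: "continuous_on UNIV f"
    proof (intro ballI allI)
      fix \<gamma> y assume g: "\<gamma> \<in> carrier \<Gamma>"
      define N where "N = nat \<lfloor>\<sigma>p (real (word_length \<Gamma> S \<gamma>))\<rfloor>"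
      define Bs where "Bs = {d \<in> carrier \<Delta>. word_length \<Delta> T d \<le> N}"
      have inB: "\<delta> \<gamma> y' \<in> Bs" for y'
        using dp[OF g, of y'] unfolding Bs_def N_def by (auto simp: le_nat_iff le_floor_iff)
      have ev: "\<forall>d\<in>Bs - {\<delta> \<gamma> y}. \<forall>\<^sub>F y' in nhds y. \<delta> \<gamma> y' \<noteq> d"
      proof
        fix d assume d: "d \<in> Bs - {\<delta> \<gamma> y}"
        then have dc: "d \<in> carrier \<Delta>" unfolding Bs_def by auto
        define h where "h = (\<lambda>y'. dist (f (actY \<gamma> y')) (actX d (f y')))"
        have c1: "continuous_on UNIV (\<lambda>y'. f (actY \<gamma> y'))"
          by (rule continuous_on_compose2[OF fc Y.act_cont[OF g]]) auto
        have c2: "continuous_on UNIV (\<lambda>y'. actX d (f y'))"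
          by (rule continuous_on_compose2[OF X.act_cont[OF dc] fc]) auto
        have ch: "continuous_on UNIV h" unfolding h_def by (intro continuous_on_dist c1 c2)
        have op: "open {y'. (\<lambda>_. 0) y' < h y'}" by (rule open_Collect_less[OF continuous_on_const ch])
        have "actX (\<delta> \<gamma> y) (f y) \<noteq> actX d (f y)" using X.act_eq_imp dp[OF g, of y] dc d by blast
        then have hy: "h y > 0" unfolding h_def using dp[OF g, of y] by simp
        have "\<forall>x\<in>{y'. 0 < h y'}. \<delta> \<gamma> x \<noteq> d"
        proof
          fix x assume "x \<in> {y'. 0 < h y'}"
          then have "0 < h x" by simp
          then show "\<delta> \<gamma> x \<noteq> d" unfolding h_def using dp[OF g, of x] by auto
        qed
        then show "\<forall>\<^sub>F y' in nhds y. \<delta> \<gamma> y' \<noteq> d"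
          unfolding eventually_nhds using op hy by (intro exI[of _ "{y'. 0 < h y'}"]) auto
      qed
      have fB: "finite (Bs - {\<delta> \<gamma> y})" unfolding Bs_def using X.finite_ball by simp
      from eventually_ball_finite[OF fB ev]
      show "\<forall>\<^sub>F y' in nhds y. \<delta> \<gamma> y' = \<delta> \<gamma> y"
        by (rule eventually_mono) (use inB in blast)
    qed
    have lower: "\<exists>\<rho>. control_fun \<rho> \<and> (\<forall>a\<in>carrier \<Gamma>. \<forall>y. \<rho> (real (word_length \<Gamma> S a)) \<le> real (word_length \<Delta> T (\<delta> a y)))"
    proof (rule lower_control)
      show "\<forall>r. \<exists>a\<in>carrier \<Gamma>. r \<le> real (word_length \<Gamma> S a)"
        using Y.infinite_long[OF False] by (meson less_imp_le)
      show "\<forall>K. \<exists>B. \<forall>a\<in>carrier \<Gamma>. \<forall>y. word_length \<Delta> T (\<delta> a y) \<le> K \<longrightarrow> real (word_length \<Gamma> S a) \<le> B"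
      proof
        fix K
        obtain L where L: "\<forall>x\<ge>L. \<sigma>m x > real K" using sm_big by blast
        show "\<exists>B. \<forall>a\<in>carrier \<Gamma>. \<forall>y. word_length \<Delta> T (\<delta> a y) \<le> K \<longrightarrow> real (word_length \<Gamma> S a) \<le> B"
        proof (intro exI[of _ L] ballI allI impI)
          fix g y assume g: "g \<in> carrier \<Gamma>" and K: "word_length \<Delta> T (\<delta> g y) \<le> K"
          show "real (word_length \<Gamma> S g) \<le> L"
          proof (rule S1[OF g, of y], rule ballI, rule ccontr)
            fix i assume i: "i \<in> I" and "\<not> DD S actY (t i) y (actY g y) \<le> L"
            then have "\<sigma>m (DD S actY (t i) y (actY g y)) > real K" using L by auto
            moreover have "\<sigma>m (DD S actY (t i) y (actY g y)) \<le> DD T actX (\<tau> i) (f y) (f (actY g y))"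
              using hyp[OF i] by blast
            moreover have "DD T actX (\<tau> i) (f y) (f (actY g y)) \<le> real (word_length \<Delta> T (\<delta> g y))"
              using dp[OF g, of y] X.DD_wl[of "\<tau> i" "\<delta> g y" "f y"] taupos[OF i] by simp
            ultimately show False using K by simp
          qed
        qed
      qed
    qed
    then obtain \<rho>m where rm: "control_fun \<rho>m"
      "\<forall>a\<in>carrier \<Gamma>. \<forall>y. \<rho>m (real (word_length \<Gamma> S a)) \<le> real (word_length \<Delta> T (\<delta> a y))" by blast
    have bnd: "\<forall>\<gamma>\<in>carrier \<Gamma>. \<forall>y.
                  \<rho>m (real (word_length \<Gamma> S \<gamma>)) \<le> real (word_length \<Delta> T (\<delta> \<gamma> y)) \<and>
                  real (word_length \<Delta> T (\<delta> \<gamma> y)) \<le> \<sigma>p (real (word_length \<Gamma> S \<gamma>))"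
      using rm(2) dp by blast
    have ce: "\<exists>\<phi>. coarse_embedding \<Gamma> S \<Delta> T \<phi>"
      by (rule cocycle_to_ce[OF Y.is_group X.is_group Y.ga coc rm(1) assms(10) bnd])
    show ?thesis using coc lc bnd ce rm(1) assms(10) by blast
  qed
qed

end
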